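(* Let $(G,k)$ be an instance and $S\subseteq V$ with $|S|\le 4k$. If a large-dense vertex $v$ lies in a connected component of $G-S$ that is a tree, then every feasible solution contains $v$; consequently $(G,k)$ is a yes-instance iff $(G-v,k-1)$ is.
   Context: Graphs are undirected, without self-loops, possibly with multi-edges. $N(v)$ is the set of vertices adjacent to $v$; $\rho(v)$ is the number of unordered pairs $\{u_1,u_2\}\subseteq N(v)$ joined by at least one edge. A vertex $v$ is large-dense if $|N(v)|>7k$ and $\rho(v)> |N(v)|(|N(v)|-1)/4$. A vertex set induces a clique if between any two distinct vertices there is exactly one edge, and a tree if it is connected and acyclic (two parallel edges form a cycle). A feasible solution is $X\subseteq V$, $|X|\le k$, with every component of $G-X$ a clique or a tree. *)

theory Defs
  imports Complex_Main
begin

text \<open>A multigraph: finite vertex set together with a symmetric edge-multiplicity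
  function (number of parallel edges between two vertices), no self-loops.
  All notions below only look at multiplicities between vertices of the vertex set.\<close>

type_synonym 'a mgraph = "'a set \<times> ('a \<Rightarrow> 'a \<Rightarrow> nat)"

definition verts :: "'a mgraph \<Rightarrow> 'a set" where "verts G = fst G"
definition mult :: "'a mgraph \<Rightarrow> 'a \<Rightarrow> 'a \<Rightarrow> nat" where "mult G = snd G"

definition wf_graph :: "'a mgraph \<Rightarrow> bool" where
  "wf_graph G \<longleftrightarrow> finite (verts G) \<and> (\<forall>u w. mult G u w = mult G w u) \<and> (\<forall>u. mult G u u = 0)"

definition adj :: "'a mgraph \<Rightarrow> 'a \<Rightarrow> 'a \<Rightarrow> bool" where
  "adj G u w \<longleftrightarrow> u \<in> verts G \<and> w \<in> verts G \<and> mult G u w > 0"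

definition nbrs :: "'a mgraph \<Rightarrow> 'a \<Rightarrow> 'a set" where
  "nbrs G v = {u. adj G v u}"

definition rho :: "'a mgraph \<Rightarrow> 'a \<Rightarrow> nat" where
  "rho G v = card {{u1, u2} | u1 u2. u1 \<in> nbrs G v \<and> u2 \<in> nbrs G v \<and> u1 \<noteq> u2 \<and> adj G u1 u2}"

definition large_dense :: "'a mgraph \<Rightarrow> nat \<Rightarrow> 'a \<Rightarrow> bool" where
  "large_dense G k v \<longleftrightarrow> card (nbrs G v) > 7 * k \<and>
     real (rho G v) > real (card (nbrs G v)) * (real (card (nbrs G v)) - 1) / 4"

definition del :: "'a mgraph \<Rightarrow> 'a set \<Rightarrow> 'a mgraph" where
  "del G X = (verts G - X, \<lambda>u w. if u \<in> X \<or> w \<in> X then 0 else mult G u w)"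

definition comp :: "'a mgraph \<Rightarrow> 'a \<Rightarrow> 'a set" where
  "comp G v = {u. (adj G)\<^sup>*\<^sup>* v u}"

definition components :: "'a mgraph \<Rightarrow> 'a set set" where
  "components G = {comp G v | v. v \<in> verts G}"

definition induces_clique :: "'a mgraph \<Rightarrow> 'a set \<Rightarrow> bool" where
  "induces_clique G W \<longleftrightarrow> W \<subseteq> verts G \<and> (\<forall>u\<in>W. \<forall>w\<in>W. u \<noteq> w \<longrightarrow> mult G u w = 1)"

definition connected_in :: "'a mgraph \<Rightarrow> 'a set \<Rightarrow> bool" where
  "connected_in G W \<longleftrightarrow> W \<noteq> {} \<and>
     (\<forall>u\<in>W. \<forall>w\<in>W. (\<lambda>a b. adj G a b \<and> a \<in> W \<and> b \<in> W)\<^sup>*\<^sup>* u w)"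

definition has_cycle_in :: "'a mgraph \<Rightarrow> 'a set \<Rightarrow> bool" where
  "has_cycle_in G W \<longleftrightarrow>
     (\<exists>u\<in>W. \<exists>w\<in>W. u \<noteq> w \<and> mult G u w \<ge> 2) \<or>
     (\<exists>cs. length cs \<ge> 3 \<and> distinct cs \<and> set cs \<subseteq> W \<and>
        (\<forall>i < length cs. adj G (cs ! i) (cs ! ((i + 1) mod length cs))))"

definition induces_tree :: "'a mgraph \<Rightarrow> 'a set \<Rightarrow> bool" where
  "induces_tree G W \<longleftrightarrow> W \<subseteq> verts G \<and> connected_in G W \<and> \<not> has_cycle_in G W"

definition feasible :: "'a mgraph \<Rightarrow> nat \<Rightarrow> 'a set \<Rightarrow> bool" where
  "feasible G k X \<longleftrightarrow> X \<subseteq> verts G \<and> card X \<le> k \<and>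
     (\<forall>C \<in> components (del G X). induces_clique (del G X) C \<or> induces_tree (del G X) C)"

definition yes_instance :: "'a mgraph \<Rightarrow> nat \<Rightarrow> bool" where
  "yes_instance G k \<longleftrightarrow> (\<exists>X. feasible G k X)"

end

theory Submission
  imports Defs
begin

lemma verts_del[simp]: "verts (del G X) = verts G - X"
  by (simp add: del_def verts_def)

lemma mult_del[simp]: "mult (del G X) u w = (if u \<in> X \<or> w \<in> X then 0 else mult G u w)"
  by (simp add: del_def mult_def)

lemma adj_del: "adj (del G X) a b \<longleftrightarrow> a \<in> verts G - X \<and> b \<in> verts G - X \<and> mult G a b > 0"
  by (auto simp: adj_def)

lemma del_del: "del (del G A) B = del G (A \<union> B)"
  unfolding del_def verts_def mult_def by (auto intro!: ext)

lemma tri_cycle: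
  assumes "v \<in> W" "a \<in> W" "b \<in> W" "v \<noteq> a" "v \<noteq> b" "a \<noteq> b"
    "adj H v a" "adj H a b" "adj H b v"
  shows "has_cycle_in H W"
proof -
  have "\<forall>i < length [v,a,b]. adj H ([v,a,b] ! i) ([v,a,b] ! ((i + 1) mod length [v,a,b]))"
  proof (intro allI impI)
    fix i assume "i < length [v,a,b]"
    then have "i = 0 \<or> i = 1 \<or> i = 2" by auto
    then show "adj H ([v,a,b] ! i) ([v,a,b] ! ((i + 1) mod length [v,a,b]))"
      using assms by auto
  qed
  then show ?thesis unfolding has_cycle_in_def using assms
    by (intro disjI2 exI[of _ "[v,a,b]"]) auto
qed

lemma in_comp: "adj H v u \<Longrightarrow> u \<in> comp H v"
  by (simp add: comp_def)

lemma self_comp: "v \<in> comp H v"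
  by (simp add: comp_def)

theorem mainTheorem10:
  fixes G :: "'a mgraph" and k :: nat and S :: "'a set" and v :: 'a
  assumes "wf_graph G"
    and "S \<subseteq> verts G" and "card S \<le> 4 * k"
    and "v \<in> verts G - S"
    and "large_dense G k v"
    and "induces_tree (del G S) (comp (del G S) v)"
  shows "(\<forall>X. feasible G k X \<longrightarrow> v \<in> X) \<and>
         (yes_instance G k \<longleftrightarrow> (k \<ge> 1 \<and> yes_instance (del G {v}) (k - 1)))"
proof -
  have fin: "finite (verts G)" and sym: "\<And>u w. mult G u w = mult G w u"
    and loop: "\<And>u. mult G u u = 0"
    using assms(1) by (auto simp: wf_graph_def)
  define N where "N = nbrs G v"
  define P where "P = {{u1, u2} | u1 u2. u1 \<in> N \<and> u2 \<in> N \<and> u1 \<noteq> u2 \<and> adj G u1 u2}"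
  have rhoP: "rho G v = card P" unfolding P_def N_def rho_def by simp
  have NV: "N \<subseteq> verts G" unfolding N_def nbrs_def adj_def by auto
  have finN: "finite N" using NV fin finite_subset by blast
  have vN: "v \<notin> N" unfolding N_def nbrs_def adj_def using loop by auto
  have ld1: "card N > 7 * k"
    and ld2: "real (card P) > real (card N) * (real (card N) - 1) / 4"
    using assms(5) rhoP unfolding large_dense_def N_def by auto
  have finS: "finite S" using assms(2) fin finite_subset by blast
  have Tree: "\<not> has_cycle_in (del G S) (comp (del G S) v)"
    using assms(6) by (simp add: induces_tree_def)
  have small: "card N \<le> 1 \<Longrightarrow> False"
  proof -
    assume c: "card N \<le> 1"
    have "P = {}"
    proof (rule ccontr)
      assume "P \<noteq> {}"
      then obtain u1 u2 where "u1 \<in> N" "u2 \<in> N" "u1 \<noteq> u2" unfolding P_def by blast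
      then have "card {u1,u2} \<le> card N" using finN by (intro card_mono) auto
      then show False using c \<open>u1 \<noteq> u2\<close> by simp
    qed
    then have "card N = 0 \<or> card N = 1" using c by auto
    then show False using ld2 \<open>P = {}\<close> by auto
  qed
  have part1: "v \<in> X" if feas: "feasible G k X" for X
  proof (rule ccontr)
    assume vX: "v \<notin> X"
    have XV: "X \<subseteq> verts G" and cX: "card X \<le> k" using feas by (auto simp: feasible_def)
    have finX: "finite X" using XV fin finite_subset by blast
    define C where "C = comp (del G X) v"
    have "C \<in> components (del G X)" unfolding C_def components_def
      using vX assms(4) by auto
    then have cases: "induces_clique (del G X) C \<or> induces_tree (del G X) C"
      using feas by (auto simp: feasible_def)
    have NC: "u \<in> C" if "u \<in> N - X" for u
      unfolding C_def using that assms(4) vX NV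
      by (intro in_comp) (auto simp: adj_del N_def nbrs_def adj_def)
    have vC: "v \<in> C" unfolding C_def by (rule self_comp)
    from cases show False
    proof
      assume cl: "induces_clique (del G X) C"
      have one: "a = b" if "a \<in> N - X - S" "b \<in> N - X - S" for a b
      proof (rule ccontr)
        assume ab: "a \<noteq> b"
        have inC: "a \<in> C" "b \<in> C" using NC that by auto
        have cl2: "\<forall>u\<in>C. \<forall>w\<in>C. u \<noteq> w \<longrightarrow> mult (del G X) u w = 1"
          using cl unfolding induces_clique_def by (rule conjunct2)
        have "mult (del G X) a b = 1" using cl2[rule_format, OF inC ab] .
        then have m: "mult G a b = 1" using that by (simp split: if_splits)
        have ad: "adj G v a" "adj G v b" using that by (auto simp: N_def nbrs_def)
        have "has_cycle_in (del G S) (comp (del G S) v)"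
        proof (rule tri_cycle[of v _ a b])
          show "adj (del G S) v a" "adj (del G S) b v" "adj (del G S) a b"
            using ad that assms(4) m NV sym[of b v] by (auto simp: adj_del adj_def)
          then show "a \<in> comp (del G S) v" "b \<in> comp (del G S) v"
            using sym[of b v] by (auto intro: in_comp simp: adj_del)
        qed (use that ab vN in \<open>auto intro: self_comp\<close>)
        then show False using Tree by simp
      qed
      have c1: "card (N - X - S) \<le> 1" using one finN
        by (metis One_nat_def card_le_Suc0_iff_eq finite_Diff)
      have "N \<subseteq> X \<union> S \<union> (N - X - S)" by auto
      then have "card N \<le> card (X \<union> S \<union> (N - X - S))" using finX finS finN
        by (intro card_mono) auto
      also have "\<dots> \<le> card X + card S + card (N - X - S)"
        by (meson add_le_mono card_Un_le le_refl order_trans)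
      finally have "card N \<le> 5 * k + 1" using c1 cX assms(3) by linarith
      then have "card N \<le> 1" using ld1 by linarith
      then show False by (rule small)
    next
      assume tr: "induces_tree (del G X) C"
      then have noc: "\<not> has_cycle_in (del G X) C" by (simp add: induces_tree_def)
      have key: "a \<in> X \<or> b \<in> X" if "a \<in> N" "b \<in> N" "a \<noteq> b" "adj G a b" for a b
      proof (rule ccontr)
        assume "\<not> (a \<in> X \<or> b \<in> X)"
        then have ab: "a \<in> N - X" "b \<in> N - X" using that by auto
        have ad: "adj G v a" "adj G v b" using that by (auto simp: N_def nbrs_def)
        have "has_cycle_in (del G X) C"
        proof (rule tri_cycle[of v _ a b])
          show "adj (del G X) v a" "adj (del G X) b v" "adj (del G X) a b"
            using ad ab that assms(4) vX NV sym[of b v] by (auto simp: adj_del adj_def)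
        qed (use that ab vN vC NC in \<open>auto\<close>)
        then show False using noc by simp
      qed
      have "P \<subseteq> (\<Union>x\<in>X \<inter> N. (\<lambda>u. {x,u}) ` (N - {x}))"
      proof
        fix p assume "p \<in> P"
        then obtain a b where p: "p = {a,b}" "a \<in> N" "b \<in> N" "a \<noteq> b" "adj G a b"
          unfolding P_def by blast
        then have "a \<in> X \<or> b \<in> X" using key by blast
        then show "p \<in> (\<Union>x\<in>X \<inter> N. (\<lambda>u. {x,u}) ` (N - {x}))"
          using p by (auto simp: insert_commute)
      qed
      then have "card P \<le> card (\<Union>x\<in>X \<inter> N. (\<lambda>u. {x,u}) ` (N - {x}))"
        using finX finN by (intro card_mono) auto
      also have "\<dots> \<le> (\<Sum>x\<in>X \<inter> N. card ((\<lambda>u. {x,u}) ` (N - {x})))"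
        by (rule card_UN_le) (use finX in auto)
      also have "\<dots> \<le> (\<Sum>x\<in>X \<inter> N. card N - 1)"
      proof (rule sum_mono)
        fix x assume "x \<in> X \<inter> N"
        then have "card (N - {x}) = card N - 1" using finN by simp
        then show "card ((\<lambda>u. {x,u}) ` (N - {x})) \<le> card N - 1"
          by (metis card_image_le finN finite_Diff)
      qed
      also have "\<dots> = card (X \<inter> N) * (card N - 1)" by simp
      also have "\<dots> \<le> k * (card N - 1)"
        using cX card_mono[OF finX, of "X \<inter> N"] by (intro mult_right_mono) auto
      finally have cP: "card P \<le> k * (card N - 1)" .
      have d2: "card N \<ge> 2" using small by fastforce
      have r1: "real (card P) \<le> real k * (real (card N) - 1)"
      proof -
        have "real (card P) \<le> real (k * (card N - 1))" using cP by (simp only: of_nat_le_iff)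
        moreover have "real (card N - 1) = real (card N) - 1" using d2 by (simp add: of_nat_diff)
        ultimately show ?thesis by simp
      qed
      have "real (card N) \<ge> 7 * real k + 1" using ld1 by linarith
      then have "real (card N) * (real (card N) - 1) \<ge> (7 * real k + 1) * (real (card N) - 1)"
        using d2 by (intro mult_right_mono) auto
      then show False using r1 ld2 d2 by (simp add: algebra_simps)
    qed
  qed
  have part2: "yes_instance G k \<longleftrightarrow> (k \<ge> 1 \<and> yes_instance (del G {v}) (k - 1))"
  proof
    assume "yes_instance G k"
    then obtain X where X: "feasible G k X" by (auto simp: yes_instance_def)
    then have vX: "v \<in> X" using part1 by blast
    have XV: "X \<subseteq> verts G" and cX: "card X \<le> k" using X by (auto simp: feasible_def)
    have finX: "finite X" using XV fin finite_subset by blast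
    have c1: "card X \<ge> 1" using vX finX by (metis One_nat_def Suc_leI card_gt_0_iff empty_iff)
    have eq: "del (del G {v}) (X - {v}) = del G X" using vX by (simp add: del_del insert_absorb)
    have "feasible (del G {v}) (k - 1) (X - {v})"
      using X XV cX vX finX unfolding feasible_def eq by auto
    then show "k \<ge> 1 \<and> yes_instance (del G {v}) (k - 1)"
      using c1 cX by (auto simp: yes_instance_def)
  next
    assume "k \<ge> 1 \<and> yes_instance (del G {v}) (k - 1)"
    then obtain Y where k1: "k \<ge> 1" and Y: "feasible (del G {v}) (k - 1) Y"
      by (auto simp: yes_instance_def)
    have YV: "Y \<subseteq> verts G - {v}" and cY: "card Y \<le> k - 1" using Y by (auto simp: feasible_def)
    have finY: "finite Y" using YV fin finite_subset by blast
    have eq: "del (del G {v}) Y = del G (insert v Y)" by (simp add: del_del)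
    have "v \<notin> Y" using YV by auto
    then have "card (insert v Y) \<le> k" using finY cY k1
      by simp
    then have "feasible G k (insert v Y)"
      using Y YV assms(4) unfolding feasible_def eq by auto
    then show "yes_instance G k" by (auto simp: yes_instance_def)
  qed
  show ?thesis using part1 part2 by blast
qed

end
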